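(* Let $(X,e,\mu)$ be an $\mathrm{NP}_2$-digital H-space with $X$ $\mathrm{NP}_2$-irreducible. Then $\{e\}$ is a connected component of $X$, so $X=\{e\}\sqcup Z$ with $Z=X\setminus\{e\}$, and there exist an $\mathrm{NP}_2$-continuous map $\tau:Z\times Z\to Z$ and a subset $A\subseteq Z\times Z$ which is a union of connected components of $Z\times Z$ (with the $\mathrm{NP}_2$ adjacency) such that for all $x,y\in X$: $\mu(x,y)=\tau(x,y)$ if $(x,y)\in A$; $\mu(x,y)=x$ if $y=e$; $\mu(x,y)=y$ if $x=e$; and $\mu(x,y)=e$ otherwise. In particular $e$ is a two-sided unit for $\mu$.
   Context: A digital image is a finite set with a reflexive symmetric adjacency relation (a finite reflexive graph); continuous maps send adjacent points to adjacent points. On products, $\mathrm{NP}_2$ declares two tuples adjacent iff coordinates are adjacent in at most 2 positions and equal elsewhere. An $\mathrm{NP}_2$-homotopy from $f$ to $g:X\to Y$ is an $\mathrm{NP}_2$-continuous $H:X\times[0,m]_{\mathbb{Z}}\to Y$ with $H(\cdot,0)=f$, $H(\cdot,m)=g$; write $f\simeq_2 g$. $X$ is $\mathrm{NP}_2$-irreducible if it is not $\mathrm{NP}_2$-homotopy equivalent to a digital image with fewer points. An $\mathrm{NP}_2$-digital H-space is $(X,e,\mu)$ with $\mu:X\times X\to X$ $\mathrm{NP}_2$-continuous, $\mu\circ(\mathrm{id}_X,c_e)\simeq_2\mathrm{id}_X$, $\mu\circ(c_e,\mathrm{id}_X)\simeq_2\mathrm{id}_X$, where $(f,g)(x)=(f(x),g(x))$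 and $c_e$ is constant at $e$ (homotopies need not be pointed). *)

theory Defs
  imports Main
begin

definition digital_image :: "'a set \<Rightarrow> ('a \<Rightarrow> 'a \<Rightarrow> bool) \<Rightarrow> bool" where
  "digital_image X adj \<longleftrightarrow> finite X \<and> (\<forall>x\<in>X. adj x x) \<and>
     (\<forall>x\<in>X. \<forall>y\<in>X. adj x y \<longrightarrow> adj y x)"

definition np2 :: "('a \<Rightarrow> 'a \<Rightarrow> bool) \<Rightarrow> ('b \<Rightarrow> 'b \<Rightarrow> bool) \<Rightarrow> 'a \<times> 'b \<Rightarrow> 'a \<times> 'b \<Rightarrow> bool" where
  "np2 adjX adjY p q \<longleftrightarrow> (fst p = fst q \<or> adjX (fst p) (fst q)) \<and> (snd p = snd q \<or> adjY (snd p) (snd q))"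

definition int_adj :: "int \<Rightarrow> int \<Rightarrow> bool" where
  "int_adj a b \<longleftrightarrow> \<bar>a - b\<bar> \<le> 1"

definition dcont :: "'a set \<Rightarrow> ('a \<Rightarrow> 'a \<Rightarrow> bool) \<Rightarrow> 'b set \<Rightarrow> ('b \<Rightarrow> 'b \<Rightarrow> bool) \<Rightarrow> ('a \<Rightarrow> 'b) \<Rightarrow> bool" where
  "dcont X adjX Y adjY f \<longleftrightarrow> (\<forall>x\<in>X. f x \<in> Y) \<and>
     (\<forall>x\<in>X. \<forall>x'\<in>X. adjX x x' \<longrightarrow> adjY (f x) (f x'))"

text \<open>NP_2-homotopy f \<simeq>_2 g : X \<rightarrow> Y (not necessarily pointed).\<close>
definition np2_homotopic :: "'a set \<Rightarrow> ('a \<Rightarrow> 'a \<Rightarrow> bool) \<Rightarrow> 'b set \<Rightarrow> ('b \<Rightarrow> 'b \<Rightarrow> bool)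
    \<Rightarrow> ('a \<Rightarrow> 'b) \<Rightarrow> ('a \<Rightarrow> 'b) \<Rightarrow> bool" where
  "np2_homotopic X adjX Y adjY f g \<longleftrightarrow>
     (\<exists>m::nat. \<exists>H :: 'a \<times> int \<Rightarrow> 'b.
        dcont (X \<times> {0..int m}) (np2 adjX int_adj) Y adjY H \<and>
        (\<forall>x\<in>X. H (x, 0) = f x \<and> H (x, int m) = g x))"

definition np2_htpy_equiv :: "'a set \<Rightarrow> ('a \<Rightarrow> 'a \<Rightarrow> bool) \<Rightarrow> 'b set \<Rightarrow> ('b \<Rightarrow> 'b \<Rightarrow> bool) \<Rightarrow> bool" where
  "np2_htpy_equiv X adjX Y adjY \<longleftrightarrow>
     (\<exists>f g. dcont X adjX Y adjY f \<and> dcont Y adjY X adjX g \<and>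
        np2_homotopic X adjX X adjX (g \<circ> f) id \<and>
        np2_homotopic Y adjY Y adjY (f \<circ> g) id)"

text \<open>Competitor images range over the same element type; since a smaller finite
image can always be injectively relabelled into the type of X, this loses nothing.\<close>
definition np2_irreducible :: "'a set \<Rightarrow> ('a \<Rightarrow> 'a \<Rightarrow> bool) \<Rightarrow> bool" where
  "np2_irreducible X adj \<longleftrightarrow>
     \<not> (\<exists>(Y :: 'a set) adjY. digital_image Y adjY \<and> card Y < card X \<and>
          np2_htpy_equiv X adj Y adjY)"

definition np2_hspace :: "'a set \<Rightarrow> ('a \<Rightarrow> 'a \<Rightarrow> bool) \<Rightarrow> 'a \<Rightarrow> ('a \<times> 'a \<Rightarrow> 'a) \<Rightarrow> bool" where
  "np2_hspace X adj e mu \<longleftrightarrow> digital_image X adj \<and> e \<in> X \<and>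
     dcont (X \<times> X) (np2 adj adj) X adj mu \<and>
     np2_homotopic X adj X adj (\<lambda>x. mu (x, e)) id \<and>
     np2_homotopic X adj X adj (\<lambda>x. mu (e, x)) id"

definition dcomp :: "'a set \<Rightarrow> ('a \<Rightarrow> 'a \<Rightarrow> bool) \<Rightarrow> 'a \<Rightarrow> 'a set" where
  "dcomp X adj x = {y. (x, y) \<in> {(a, b). a \<in> X \<and> b \<in> X \<and> adj a b}\<^sup>*}"

end

theory Submission
  imports Defs
begin

lemma irr_nodom:
  assumes di: "digital_image X adj" and irr: "np2_irreducible X adj"
    and xX: "x\<in>X" and yX: "y\<in>X" and dom: "\<forall>z\<in>X. adj x z \<longrightarrow> adj y z"
  shows "y = x"
proof (rule ccontr)
  assume ne: "y \<noteq> x"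
  define Y where "Y = X - {x}"
  define r where "r = (\<lambda>a. if a = x then y else a)"
  from di have fin: "finite X" and refl: "\<forall>a\<in>X. adj a a"
    and sym: "\<forall>a\<in>X. \<forall>b\<in>X. adj a b \<longrightarrow> adj b a" by (auto simp: digital_image_def)
  have dY: "digital_image Y adj" using fin refl sym by (auto simp: digital_image_def Y_def)
  have cY: "card Y < card X" unfolding Y_def by (rule card_Diff1_less[OF fin xX])
  have rX: "\<And>a. a \<in> X \<Longrightarrow> r a \<in> X" using yX by (auto simp: r_def)
  have ra1: "\<And>a a'. a \<in> X \<Longrightarrow> a' \<in> X \<Longrightarrow> adj a a' \<Longrightarrow> adj (r a) a'"
    using dom by (auto simp: r_def)
  have ra2: "\<And>a a'. a \<in> X \<Longrightarrow> a' \<in> X \<Longrightarrow> adj a a' \<Longrightarrow> adj a (r a')"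
  proof -
    fix a a' assume "a \<in> X" "a' \<in> X" "adj a a'"
    then have "adj a' a" using sym by blast
    then have "adj (r a') a" using ra1 \<open>a \<in> X\<close> \<open>a' \<in> X\<close> by blast
    then show "adj a (r a')" using sym rX \<open>a \<in> X\<close> \<open>a' \<in> X\<close> by blast
  qed
  have ra3: "\<And>a a'. a \<in> X \<Longrightarrow> a' \<in> X \<Longrightarrow> adj a a' \<Longrightarrow> adj (r a) (r a')"
  proof -
    fix a a' assume a: "a \<in> X" "a' \<in> X" "adj a a'"
    show "adj (r a) (r a')"
    proof (cases "a' = x")
      case True
      then show ?thesis using refl yX ra2[OF a] by (cases "a = x") (auto simp: r_def)
    next
      case False
      then show ?thesis using ra1[OF a] by (simp add: r_def)
    qed
  qed
  have eqadj: "\<And>a a'. a \<in> X \<Longrightarrow> a' \<in> X \<Longrightarrow> a = a' \<or> adj a a' \<Longrightarrow> adj a a'"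
    using refl by blast
  have c1: "dcont X adj Y adj r"
    unfolding dcont_def Y_def using rX ra3 ne by (auto simp: r_def)
  have c2: "dcont Y adj X adj id" unfolding dcont_def Y_def by auto
  have h1: "np2_homotopic X adj X adj (id \<circ> r) id"
    unfolding np2_homotopic_def
  proof (intro exI[of _ "1::nat"] exI[of _ "\<lambda>(a,t). if t = 0 then r a else a"] conjI)
    show "dcont (X \<times> {0..int 1}) (np2 adj int_adj) X adj (\<lambda>(a,t). if t = 0 then r a else a)"
      unfolding dcont_def np2_def
    proof (intro conjI ballI impI)
      fix p assume "p \<in> X \<times> {0..int 1}"
      then show "(case p of (a, t) \<Rightarrow> if t = 0 then r a else a) \<in> X" using rX by auto
    next
      fix p q assume p: "p \<in> X \<times> {0..int 1}" and q: "q \<in> X \<times> {0..int 1}"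
        and pq: "(fst p = fst q \<or> adj (fst p) (fst q)) \<and> (snd p = snd q \<or> int_adj (snd p) (snd q))"
      have "fst p \<in> X" "fst q \<in> X" using p q by auto
      then have "adj (fst p) (fst q)" using eqadj pq by blast
      then show "adj (case p of (a, t) \<Rightarrow> if t = 0 then r a else a) (case q of (a, t) \<Rightarrow> if t = 0 then r a else a)"
        using p q ra1 ra2 ra3 by (auto split: prod.splits)
    qed
  qed auto
  have h2: "np2_homotopic Y adj Y adj (r \<circ> id) id"
    unfolding np2_homotopic_def
  proof (intro exI[of _ "0::nat"] exI[of _ "\<lambda>(a,t). a"] conjI)
    show "dcont (Y \<times> {0..int 0}) (np2 adj int_adj) Y adj (\<lambda>(a,t). a)"
      unfolding dcont_def np2_def Y_def using eqadj by auto
    show "\<forall>xa\<in>Y. (case (xa, 0) of (a, t) \<Rightarrow> a) = (r \<circ> id) xa \<and> (case (xa, int 0) of (a, t) \<Rightarrow> a) = id xa"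
      by (auto simp: Y_def r_def)
  qed
  have "np2_htpy_equiv X adj Y adj"
    unfolding np2_htpy_equiv_def using c1 c2 h1 h2 by blast
  then show False using irr dY cY unfolding np2_irreducible_def by blast
qed

lemma htpy_id:
  assumes di: "digital_image X adj" and irr: "np2_irreducible X adj"
    and h: "np2_homotopic X adj X adj f id"
  shows "\<forall>x\<in>X. f x = x"
proof -
  from h obtain m H where Hc: "dcont (X \<times> {0..int m}) (np2 adj int_adj) X adj H"
    and Hb: "\<forall>x\<in>X. H (x, 0) = f x \<and> H (x, int m) = id x"
    unfolding np2_homotopic_def by blast
  have "\<forall>x\<in>X. H (x, int (m - j)) = x" if "j \<le> m" for j
    using that
  proof (induction j)
    case 0
    then show ?case using Hb by simp
  next
    case (Suc j)
    then have IH: "\<forall>x\<in>X. H (x, int (m - j)) = x" by simp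
    have k: "int (m - j) = int (m - Suc j) + 1" using Suc.prems by simp
    show ?case
    proof
      fix x assume xX: "x \<in> X"
      have "H (x, int (m - Suc j)) \<in> X" using Hc xX Suc.prems unfolding dcont_def by auto
      moreover have "\<forall>z\<in>X. adj x z \<longrightarrow> adj (H (x, int (m - Suc j))) z"
      proof (intro ballI impI)
        fix z assume zX: "z \<in> X" and "adj x z"
        then have "adj (H (x, int (m - Suc j))) (H (z, int (m - j)))"
          using Hc xX Suc.prems unfolding dcont_def np2_def int_adj_def
          by (auto simp: k)
        then show "adj (H (x, int (m - Suc j))) z" using IH zX by simp
      qed
      ultimately show "H (x, int (m - Suc j)) = x" using irr_nodom[OF di irr xX] by blast
    qed
  qed
  from this[of m] show ?thesis using Hb by simp
qed

theorem mainTheorem16: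
  fixes X :: "'a set" and adj :: "'a \<Rightarrow> 'a \<Rightarrow> bool" and e :: 'a
    and mu :: "'a \<times> 'a \<Rightarrow> 'a"
  assumes "np2_hspace X adj e mu"
    and "np2_irreducible X adj"
  shows "dcomp X adj e = {e} \<and>
    (\<exists>(\<tau> :: 'a \<times> 'a \<Rightarrow> 'a) (A :: ('a \<times> 'a) set).
       dcont ((X - {e}) \<times> (X - {e})) (np2 adj adj) (X - {e}) adj \<tau> \<and>
       A \<subseteq> (X - {e}) \<times> (X - {e}) \<and>
       (\<forall>p\<in>A. dcomp ((X - {e}) \<times> (X - {e})) (np2 adj adj) p \<subseteq> A) \<and>
       (\<forall>x\<in>X. \<forall>y\<in>X. mu (x, y) =
          (if (x, y) \<in> A then \<tau> (x, y)
           else if y = e then x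
           else if x = e then y
           else e))) \<and>
    (\<forall>x\<in>X. mu (x, e) = x \<and> mu (e, x) = x)"
proof -
  from assms(1) have di: "digital_image X adj" and eX: "e \<in> X"
    and muc: "dcont (X \<times> X) (np2 adj adj) X adj mu"
    and hl: "np2_homotopic X adj X adj (\<lambda>x. mu (x, e)) id"
    and hr: "np2_homotopic X adj X adj (\<lambda>x. mu (e, x)) id"
    unfolding np2_hspace_def by auto
  from di have refl: "\<forall>a\<in>X. adj a a"
    and sym: "\<forall>a\<in>X. \<forall>b\<in>X. adj a b \<longrightarrow> adj b a" by (auto simp: digital_image_def)
  have ul: "\<forall>x\<in>X. mu (x, e) = x" using htpy_id[OF di assms(2) hl] .
  have ur: "\<forall>x\<in>X. mu (e, x) = x" using htpy_id[OF di assms(2) hr] .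
  have muX: "\<And>x y. x \<in> X \<Longrightarrow> y \<in> X \<Longrightarrow> mu (x, y) \<in> X" using muc unfolding dcont_def by auto
  have isol: "a = e" if aX: "a \<in> X" and ea: "adj e a" for a
  proof -
    have ae: "adj a e" using sym aX eX ea by blast
    have "\<forall>x\<in>X. mu (x, a) = x"
    proof
      fix x assume xX: "x \<in> X"
      have "\<forall>z\<in>X. adj x z \<longrightarrow> adj (mu (x, a)) z"
      proof (intro ballI impI)
        fix z assume zX: "z \<in> X" and "adj x z"
        then have "adj (mu (x, a)) (mu (z, e))"
          using muc xX aX eX ae unfolding dcont_def np2_def by auto
        then show "adj (mu (x, a)) z" using ul zX by simp
      qed
      then show "mu (x, a) = x" using irr_nodom[OF di assms(2) xX muX[OF xX aX]] by blast
    qed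
    then have "mu (e, a) = e" using eX by blast
    then show "a = e" using ur aX by simp
  qed
  have comp: "dcomp X adj e = {e}"
  proof
    show "dcomp X adj e \<subseteq> {e}"
    proof
      fix y assume "y \<in> dcomp X adj e"
      then have "(e, y) \<in> {(a, b). a \<in> X \<and> b \<in> X \<and> adj a b}\<^sup>*" by (simp add: dcomp_def)
      then have "y = e"
        by (induction rule: rtrancl_induct) (auto intro: isol)
      then show "y \<in> {e}" by simp
    qed
    show "{e} \<subseteq> dcomp X adj e" by (simp add: dcomp_def)
  qed
  define Z where "Z = X - {e}"
  define A where "A = {p \<in> Z \<times> Z. mu p \<noteq> e}"
  define z0 where "z0 = (SOME z. z \<in> Z)"
  define \<tau> where "\<tau> = (\<lambda>p. if mu p \<noteq> e then mu p else z0)"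
  have pres: "mu p \<noteq> e \<longleftrightarrow> mu q \<noteq> e"
    if p: "p \<in> Z \<times> Z" and q: "q \<in> Z \<times> Z" and pq: "np2 adj adj p q" for p q
  proof -
    have a: "adj (mu p) (mu q)" using muc p q pq unfolding dcont_def Z_def by auto
    obtain p1 p2 where pp: "p = (p1, p2)" by (cases p)
    obtain q1 q2 where qq: "q = (q1, q2)" by (cases q)
    have mp: "mu p \<in> X" "mu q \<in> X" using muX p q unfolding Z_def pp qq by auto
    show ?thesis
    proof
      assume h: "mu p \<noteq> e"
      have "adj (mu q) (mu p)" using sym mp a by blast
      then show "mu q \<noteq> e" using isol[of "mu p"] mp h by auto
    next
      assume "mu q \<noteq> e" then show "mu p \<noteq> e" using isol[of "mu q"] mp a by auto
    qed
  qed
  have tc: "dcont (Z \<times> Z) (np2 adj adj) Z adj \<tau>"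
    unfolding dcont_def
  proof (intro conjI ballI impI)
    fix p assume p: "p \<in> Z \<times> Z"
    then have "z0 \<in> Z" unfolding z0_def by (metis SigmaE someI)
    moreover obtain p1 p2 where pp: "p = (p1, p2)" by (cases p)
    ultimately show "\<tau> p \<in> Z" using muX p unfolding \<tau>_def Z_def pp by auto
  next
    fix p q assume p: "p \<in> Z \<times> Z" and q: "q \<in> Z \<times> Z" and pq: "np2 adj adj p q"
    have z: "z0 \<in> Z" using p unfolding z0_def by (metis SigmaE someI)
    have a: "adj (mu p) (mu q)" using muc p q pq unfolding dcont_def Z_def by auto
    show "adj (\<tau> p) (\<tau> q)"
      using pres[OF p q pq] a z refl unfolding \<tau>_def Z_def by auto
  qed
  have Acl: "\<forall>p\<in>A. dcomp (Z \<times> Z) (np2 adj adj) p \<subseteq> A"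
  proof (intro ballI subsetI)
    fix p q assume pA: "p \<in> A" and "q \<in> dcomp (Z \<times> Z) (np2 adj adj) p"
    then have "(p, q) \<in> {(a, b). a \<in> Z \<times> Z \<and> b \<in> Z \<times> Z \<and> np2 adj adj a b}\<^sup>*"
      by (simp add: dcomp_def)
    then show "q \<in> A"
    proof (induction rule: rtrancl_induct)
      case base then show ?case using pA .
    next
      case (step y z)
      then show ?case using pres unfolding A_def by auto
    qed
  qed
  have mueq: "\<forall>x\<in>X. \<forall>y\<in>X. mu (x, y) =
          (if (x, y) \<in> A then \<tau> (x, y)
           else if y = e then x
           else if x = e then y
           else e)"
    using ul ur unfolding A_def \<tau>_def Z_def by auto
  show ?thesis
    using comp tc Acl mueq ul ur unfolding Z_def A_def[symmetric]
    by (intro conjI exI[of _ \<tau>] exI[of _ A]) (auto simp: A_def Z_def)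
qed

end
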